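(* Let $K$ be a number field and let $\alpha,\beta$ be multiplicatively independent positive rational numbers. Let $F\in K[[x^{\mathbb{R}}]]$ be a Hahn series satisfying nontrivial homogeneous equations $\sum_{i=0}^{d_1}P_i(x)F(x^{\alpha^i})=0$ and $\sum_{i=0}^{d_2}Q_i(x)F(x^{\beta^i})=0$ with $P_i,Q_i\in K[x]$, $P_{d_1}\ne0$, $Q_{d_2}\ne0$. Suppose there are $s,s'\in\mathbb{R}$ with ${}_{\alpha^{\mathbb{Z}}s+\mathbb{Z}[\alpha,\alpha^{-1}]}[F]\ne0$ and ${}_{\beta^{\mathbb{Z}}s'+\mathbb{Z}[\beta,\beta^{-1}]}[F]\ne0$. Then there is a positive integer $n$ such that ${}_{\mathbb{Z}[\alpha,\alpha^{-1}]}[F(x^n)]\ne0$ and ${}_{\mathbb{Z}[\beta,\beta^{-1}]}[F(x^n)]\ne0$.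
   Context: $K[[x^{\mathbb{R}}]]$ is the field of Hahn series $\sum_{i\in\mathbb{R}} f_ix^i$ ($f_i\in K$) with well-ordered support; $F(x^\gamma)=\sum_if_ix^{\gamma i}$. Positive reals are multiplicatively independent if $\log\alpha/\log\beta\notin\mathbb{Q}$. $\gamma^{\mathbb{Z}}s+\mathbb{Z}[\gamma,\gamma^{-1}]=\{\gamma^m s+r: m\in\mathbb{Z}, r\in\mathbb{Z}[\gamma,\gamma^{-1}]\}$, with $\mathbb{Z}[\gamma,\gamma^{-1}]$ the subring of $\mathbb{Q}$ generated by $\gamma^{\pm1}$. For $A\subseteq\mathbb{R}$, ${}_A[G]$ is the Hahn series of the terms of $G$ with exponents in $A$. *)

theory Defs
  imports "HOL-Computational_Algebra.Polynomial" "HOL-Analysis.Analysis"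
begin

definition number_field :: "complex set \<Rightarrow> bool" where
  "number_field K \<longleftrightarrow>
     0 \<in> K \<and> 1 \<in> K \<and>
     (\<forall>x\<in>K. \<forall>y\<in>K. x + y \<in> K \<and> x - y \<in> K \<and> x * y \<in> K) \<and>
     (\<forall>x\<in>K. x \<noteq> 0 \<longrightarrow> inverse x \<in> K) \<and>
     (\<exists>B. finite B \<and> B \<subseteq> K \<and>
        (\<forall>x\<in>K. \<exists>c. (\<forall>b\<in>B. c b \<in> \<rat>) \<and> x = (\<Sum>b\<in>B. c b * b)))"

text \<open>Hahn series with real exponents: coefficient functions with well-ordered support.\<close>
definition hahn_support :: "(real \<Rightarrow> 'a::zero) \<Rightarrow> real set" where
  "hahn_support F = {e. F e \<noteq> 0}"

definition is_hahn_series :: "(real \<Rightarrow> 'a::zero) \<Rightarrow> bool" where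
  "is_hahn_series F \<longleftrightarrow>
     (\<forall>T. T \<subseteq> hahn_support F \<longrightarrow> T \<noteq> {} \<longrightarrow> (\<exists>m\<in>T. \<forall>t\<in>T. m \<le> t))"

text \<open>Substitution F(x^gamma): coefficient of x^e is F_(e/gamma).\<close>
definition hahn_subst :: "(real \<Rightarrow> 'a) \<Rightarrow> real \<Rightarrow> (real \<Rightarrow> 'a)" where
  "hahn_subst F \<gamma> = (\<lambda>e. F (e / \<gamma>))"

definition poly_hahn_mult :: "'a::comm_ring_1 poly \<Rightarrow> (real \<Rightarrow> 'a) \<Rightarrow> (real \<Rightarrow> 'a)" where
  "poly_hahn_mult P G = (\<lambda>e. \<Sum>k\<le>degree P. coeff P k * G (e - real k))"

definition hahn_restrict :: "real set \<Rightarrow> (real \<Rightarrow> 'a::zero) \<Rightarrow> (real \<Rightarrow> 'a)" where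
  "hahn_restrict A G = (\<lambda>e. if e \<in> A then G e else 0)"

definition Zring :: "real \<Rightarrow> real set" where
  "Zring \<gamma> = {(\<Sum>k\<in>{-N..N}. of_int (c k) * \<gamma> powi k) | (N::int) (c::int \<Rightarrow> int). True}"

definition shifted_orbit :: "real \<Rightarrow> real \<Rightarrow> real set" where
  "shifted_orbit \<gamma> s = {\<gamma> powi m * s + r | (m::int) r. r \<in> Zring \<gamma>}"

definition mult_indep :: "real \<Rightarrow> real \<Rightarrow> bool" where
  "mult_indep a b \<longleftrightarrow> a > 0 \<and> b > 0 \<and> ln a / ln b \<notin> \<rat>"

end

theory Submission
  imports Defs
begin

lemma sum_single_nz:
  assumes "finite A" "a \<in> A" "\<And>x. x \<in> A \<Longrightarrow> x \<noteq> a \<Longrightarrow> g x = 0"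
  shows "sum g A = (g a :: 'b::comm_monoid_add)"
proof -
  have "sum g A = g a + sum g (A - {a})" using assms(1,2) by (simp add: sum.remove)
  also have "sum g (A - {a}) = 0" using assms(3) by (intro sum.neutral) auto
  finally show ?thesis by simp
qed

lemma min_exp_rat:
  fixes \<alpha> v :: real and F :: "real \<Rightarrow> complex" and P :: "nat \<Rightarrow> complex poly"
  assumes a0: "\<alpha> > 0" and a1: "\<alpha> \<noteq> 1" and aQ: "\<alpha> \<in> \<rat>"
    and Fv: "F v \<noteq> 0" and vmin: "\<And>t. F t \<noteq> 0 \<Longrightarrow> v \<le> t"
    and top: "P d \<noteq> 0"
    and eq: "\<forall>e. (\<Sum>i\<le>d. poly_hahn_mult (P i) (hahn_subst F (\<alpha> ^ i)) e) = 0"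
  shows "v \<in> \<rat>"
proof (rule ccontr)
  assume vQ: "v \<notin> \<rat>"
  define I where "I = {i. i \<le> d \<and> P i \<noteq> 0}"
  define ordp where "ordp i = (LEAST k. coeff (P i) k \<noteq> 0)" for i
  define val where "val i = real (ordp i) + \<alpha> ^ i * v" for i
  have finI: "finite I" unfolding I_def by auto
  have dI: "d \<in> I" unfolding I_def using top by auto
  have oex: "\<exists>k. coeff (P i) k \<noteq> 0" if "i \<in> I" for i
    using that unfolding I_def by (auto intro!: exI[where x="degree (P i)"])
  have o1: "coeff (P i) (ordp i) \<noteq> 0" if "i \<in> I" for i
    unfolding ordp_def using oex[OF that] by (rule LeastI_ex)
  have o2: "ordp i \<le> k" if "coeff (P i) k \<noteq> 0" for i k
    unfolding ordp_def using that by (rule Least_le)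
  define \<mu> where "\<mu> = Min (val ` I)"
  have \<mu>le: "\<mu> \<le> val i" if "i \<in> I" for i
    unfolding \<mu>_def using finI that by auto
  have "\<mu> \<in> val ` I" unfolding \<mu>_def using finI dI by (intro Min_in) auto
  then obtain i0 where i0: "i0 \<in> I" "val i0 = \<mu>" by auto
  have ai_inj: "\<alpha> ^ i \<noteq> \<alpha> ^ j" if "i \<noteq> j" for i j :: nat
    using a0 a1 that by (simp add: power_inject_exp')
  have uniq: "i = i0" if "i \<in> I" "val i = \<mu>" for i
  proof (rule ccontr)
    assume ne: "i \<noteq> i0"
    have "(\<alpha> ^ i - \<alpha> ^ i0) * v = real (ordp i0) - real (ordp i)"
      using i0 that unfolding val_def by (simp add: algebra_simps)
    hence "v = (real (ordp i0) - real (ordp i)) / (\<alpha> ^ i - \<alpha> ^ i0)"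
      using ai_inj[OF ne] by (simp add: field_simps)
    moreover have "(real (ordp i0) - real (ordp i)) / (\<alpha> ^ i - \<alpha> ^ i0) \<in> \<rat>"
      using aQ by (intro Rats_divide Rats_diff Rats_power) auto
    ultimately show False using vQ by simp
  qed
  have term0: "coeff (P i) k * F ((\<mu> - real k) / \<alpha> ^ i) = 0"
    if "i \<le> d" "\<not> (i = i0 \<and> k = ordp i0)" for i k
  proof (rule ccontr)
    assume nz: "coeff (P i) k * F ((\<mu> - real k) / \<alpha> ^ i) \<noteq> 0"
    hence c: "coeff (P i) k \<noteq> 0" and f: "F ((\<mu> - real k) / \<alpha> ^ i) \<noteq> 0" by auto
    have iI: "i \<in> I" unfolding I_def using c that(1) by auto
    have k1: "ordp i \<le> k" using o2[OF c] .
    have "v \<le> (\<mu> - real k) / \<alpha> ^ i" using vmin[OF f] .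
    hence "\<alpha> ^ i * v \<le> \<mu> - real k" using a0 by (simp add: field_simps)
    moreover have "\<mu> \<le> real (ordp i) + \<alpha> ^ i * v" using \<mu>le[OF iI] unfolding val_def .
    ultimately have "real k \<le> real (ordp i)" by linarith
    hence "k = ordp i" using k1 by simp
    hence "val i = \<mu>" using \<open>\<alpha> ^ i * v \<le> \<mu> - real k\<close> \<mu>le[OF iI] unfolding val_def by linarith
    hence "i = i0" using uniq iI by blast
    thus False using that(2) \<open>k = ordp i\<close> by simp
  qed
  have i0d: "i0 \<le> d" using i0 unfolding I_def by auto
  have odeg: "ordp i0 \<le> degree (P i0)" using o1[OF i0(1)] le_degree by blast
  have vi: "(\<mu> - real (ordp i0)) / \<alpha> ^ i0 = v" using i0(2) a0 unfolding val_def by (auto simp: field_simps)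
  have "(\<Sum>i\<le>d. poly_hahn_mult (P i) (hahn_subst F (\<alpha> ^ i)) \<mu>)
      = poly_hahn_mult (P i0) (hahn_subst F (\<alpha> ^ i0)) \<mu>"
  proof (rule sum_single_nz)
    fix i assume "i \<in> {..d}" "i \<noteq> i0"
    thus "poly_hahn_mult (P i) (hahn_subst F (\<alpha> ^ i)) \<mu> = 0"
      unfolding poly_hahn_mult_def hahn_subst_def by (intro sum.neutral ballI term0) auto
  qed (use i0d in auto)
  also have "\<dots> = coeff (P i0) (ordp i0) * F v"
  proof -
    have "(\<Sum>k\<le>degree (P i0). coeff (P i0) k * F ((\<mu> - real k) / \<alpha> ^ i0))
        = coeff (P i0) (ordp i0) * F ((\<mu> - real (ordp i0)) / \<alpha> ^ i0)"
    proof (rule sum_single_nz)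
      fix k assume "k \<in> {..degree (P i0)}" "k \<noteq> ordp i0"
      thus "coeff (P i0) k * F ((\<mu> - real k) / \<alpha> ^ i0) = 0"
        using i0d by (intro term0) auto
    qed (use odeg in auto)
    thus ?thesis unfolding vi poly_hahn_mult_def hahn_subst_def by simp
  qed
  also have "\<dots> \<noteq> 0" using o1[OF i0(1)] Fv by simp
  finally show False using eq by simp
qed

theorem mainTheorem11:
  fixes K :: "complex set" and \<alpha> \<beta> :: real and F :: "real \<Rightarrow> complex"
    and P Q :: "nat \<Rightarrow> complex poly" and d1 d2 :: nat
  assumes K: "number_field K"
    and \<alpha>: "\<alpha> \<in> \<rat>" "\<alpha> > 0" and \<beta>: "\<beta> \<in> \<rat>" "\<beta> > 0"
    and indep: "mult_indep \<alpha> \<beta>"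
    and F_hahn: "is_hahn_series F" and F_K: "\<forall>e. F e \<in> K"
    and P_K: "\<forall>i\<le>d1. \<forall>k. coeff (P i) k \<in> K"
    and Q_K: "\<forall>i\<le>d2. \<forall>k. coeff (Q i) k \<in> K"
    and P_top: "P d1 \<noteq> 0" and Q_top: "Q d2 \<noteq> 0"
    and eqP: "\<forall>e. (\<Sum>i\<le>d1. poly_hahn_mult (P i) (hahn_subst F (\<alpha> ^ i)) e) = 0"
    and eqQ: "\<forall>e. (\<Sum>i\<le>d2. poly_hahn_mult (Q i) (hahn_subst F (\<beta> ^ i)) e) = 0"
    and s: "\<exists>s s'. hahn_restrict (shifted_orbit \<alpha> s) F \<noteq> (\<lambda>_. 0)
                 \<and> hahn_restrict (shifted_orbit \<beta> s') F \<noteq> (\<lambda>_. 0)"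
  shows "\<exists>n::nat. n > 0 \<and>
           hahn_restrict (Zring \<alpha>) (hahn_subst F (real n)) \<noteq> (\<lambda>_. 0) \<and>
           hahn_restrict (Zring \<beta>) (hahn_subst F (real n)) \<noteq> (\<lambda>_. 0)"
proof -
  from s obtain s0 where "hahn_restrict (shifted_orbit \<alpha> s0) F \<noteq> (\<lambda>_. 0)" by blast
  hence "\<exists>e. F e \<noteq> 0"
  proof (rule contrapos_pp)
    assume "\<not> (\<exists>e. F e \<noteq> 0)"
    thus "\<not> hahn_restrict (shifted_orbit \<alpha> s0) F \<noteq> (\<lambda>_. 0)"
      unfolding hahn_restrict_def by (simp add: fun_eq_iff)
  qed
  then obtain e where "F e \<noteq> 0" by blast
  hence ne: "hahn_support F \<noteq> {}" unfolding hahn_support_def by auto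
  obtain v where v: "v \<in> hahn_support F" "\<forall>t\<in>hahn_support F. v \<le> t"
    using F_hahn ne unfolding is_hahn_series_def by blast
  have Fv: "F v \<noteq> 0" using v(1) unfolding hahn_support_def by auto
  have vmin: "\<And>t. F t \<noteq> 0 \<Longrightarrow> v \<le> t" using v(2) unfolding hahn_support_def by auto
  have a1: "\<alpha> \<noteq> 1"
  proof
    assume "\<alpha> = 1"
    hence "ln \<alpha> / ln \<beta> = 0" by simp
    thus False using indep unfolding mult_indep_def by auto
  qed
  have "v \<in> \<rat>" by (rule min_exp_rat[OF \<alpha>(2) a1 \<alpha>(1) Fv vmin P_top eqP])
  then obtain a b :: int where ab: "b > 0" "v = of_int a / of_int b" by (rule Rats_cases')
  define n where "n = nat b"
  have n: "n > 0" "real n = of_int b" using ab unfolding n_def by auto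
  have Z: "of_int a \<in> Zring \<gamma>" for \<gamma>
    unfolding Zring_def
    by (rule CollectI, rule exI[where x=0], rule exI[where x="\<lambda>_. a"]) simp
  have H: "hahn_restrict (Zring \<gamma>) (hahn_subst F (real n)) \<noteq> (\<lambda>_. 0)" for \<gamma>
  proof
    assume "hahn_restrict (Zring \<gamma>) (hahn_subst F (real n)) = (\<lambda>_. 0)"
    hence "hahn_restrict (Zring \<gamma>) (hahn_subst F (real n)) (of_int a) = 0" by simp
    hence "F v = 0" using Z ab n unfolding hahn_restrict_def hahn_subst_def by simp
    thus False using Fv by simp
  qed
  show ?thesis using n H by blast
qed

end
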